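(* Let $G = \mathbb{Z}_9$, $k = 3$ and $N = \langle 3\rangle = \{0,3,6\}$. Then $|G| = k^2$, $N\le G$ with $|N|=k$, the sum of the elements of $N$ is $0$, and the sum of the elements of $G/N$ is the identity coset $N$, yet $\exp(G)=9$ does not divide $k$ and $G$ has no pandiagonal magic Cayley-sudoku table. Also, for $G=\mathbb{Z}_2\times\mathbb{Z}_2$, $k=2$ and any subgroup $N$ of order $2$, we have $|G|=k^2$ and $\exp(G)$ divides $k$, but $G$ has no pandiagonal magic Cayley-sudoku table. Consequently, in Theorem 4.1 the hypothesis that $\exp(G)$ divides $k$ cannot be omitted, and hypotheses (3) (product of elements of $N$ is $1$) and (4) (product of elements of $G/N$ is $N$) cannot both be omitted.
   Context: Theorem 4.1 states: if $G$ is a finite abelian group with $|G|=k^2$, $\exp(G)$ dividing $k$, $N\le G$ with $|N|=k$, (3) the product of all elements of $N$ is the identity, and (4) the product of all elements of $G/N$ is the identity coset $N$, then $G$ has a pandiagonal magic Cayley-sudoku table. A Cayley table of $G$ is a square array with rows and columns each labeled by a listing of all elements of $G$, entry in row $r$, column $c$ being $r+c$. A Cayley-sudoku table is a Cayley table whose body is partitioned into uniformly sized rectangular blocks (consecutive rows and columns) each containing every element exactly once. It is pandiagonal magic if the blocks are square and every row (left to right), column, broken diagonal and broken antidiagonal (top to bottom) sum of each block is the identity; broken diagonals of a $k\times k$ array are the entries at positions $(\ell,\ell+j)$, broken antidiagonals those at $(\ell,j-\ell)$, $\ell=1,\dots,k$, indices mod $k$. *)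

theory Defs
  imports "HOL-Algebra.Algebra"
begin

definition group_exponent :: "('a, 'b) monoid_scheme \<Rightarrow> nat" where
  "group_exponent G = (LEAST n. 0 < n \<and> (\<forall>x\<in>carrier G. x [^]\<^bsub>G\<^esub> n = \<one>\<^bsub>G\<^esub>))"

text \<open>A Cayley table of G has rows labelled by a listing R and columns by a listing C
  (indices 0..card-1); entry (r,c) is R r times C c.\<close>
definition pandiagonal_magic_cs_table ::
  "('a, 'b) monoid_scheme \<Rightarrow> nat \<Rightarrow> (nat \<Rightarrow> 'a) \<Rightarrow> (nat \<Rightarrow> 'a) \<Rightarrow> bool" where
  "pandiagonal_magic_cs_table G k R C \<longleftrightarrow>
     k * k = card (carrier G) \<and>
     bij_betw R {..<card (carrier G)} (carrier G) \<and>
     bij_betw C {..<card (carrier G)} (carrier G) \<and>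
     (\<forall>a<k. \<forall>b<k.
        let e = (\<lambda>i j. R (a * k + i) \<otimes>\<^bsub>G\<^esub> C (b * k + j)) in
        bij_betw (\<lambda>(i, j). e i j) ({..<k} \<times> {..<k}) (carrier G) \<and>
        (\<forall>i<k. finprod G (\<lambda>j. e i j) {..<k} = \<one>\<^bsub>G\<^esub>) \<and>
        (\<forall>j<k. finprod G (\<lambda>i. e i j) {..<k} = \<one>\<^bsub>G\<^esub>) \<and>
        (\<forall>j<k. finprod G (\<lambda>l. e l ((l + j) mod k)) {..<k} = \<one>\<^bsub>G\<^esub>) \<and>
        (\<forall>j<k. finprod G (\<lambda>l. e l ((j + k - l) mod k)) {..<k} = \<one>\<^bsub>G\<^esub>))"

definition has_pandiagonal_magic_cs_table :: "('a, 'b) monoid_scheme \<Rightarrow> bool" where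
  "has_pandiagonal_magic_cs_table G \<longleftrightarrow> (\<exists>k R C. pandiagonal_magic_cs_table G k R C)"

end

theory Submission
  imports Defs
begin


lemma finprod_imod:
  assumes "finite A" "f ` A \<subseteq> carrier (integer_mod_group n)"
  shows "finprod (integer_mod_group n) f A = sum f A mod int n"
  using assms
proof (induction A rule: finite_induct)
  case empty
  then show ?case by (simp add: finprod_def)
next
  case (insert a F)
  interpret comm_group "integer_mod_group n" by simp
  have "finprod (integer_mod_group n) f (insert a F) = (f a + finprod (integer_mod_group n) f F) mod int n"
    using insert by (subst finprod_insert) auto
  also have "\<dots> = (f a + sum f F) mod int n" using insert by (simp add: mod_simps)
  finally show ?case using insert by simp
qed

lemma Z9_carrier: "carrier (integer_mod_group 9) = {0,1,2,3,4,5,6,7,8}"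
  by (auto simp: carrier_integer_mod_group)

lemma Z9_sub: "subgroup {0,3,6} (integer_mod_group 9)"
  by (rule subgroup.intro) (auto simp: carrier_integer_mod_group)

lemma Z9_rcosets: "carrier (integer_mod_group 9 Mod {0,3,6}) = {{0,3,6},{1,4,7},{2,5,8}}"
  unfolding FactGroup_def RCOSETS_def r_coset_def Z9_carrier by auto

lemma Z9_exp: "group_exponent (integer_mod_group 9) = 9"
  unfolding group_exponent_def
proof (rule Least_equality)
  show "0 < (9::nat) \<and> (\<forall>x\<in>carrier (integer_mod_group 9). x [^]\<^bsub>integer_mod_group 9\<^esub> (9::nat) = \<one>\<^bsub>integer_mod_group 9\<^esub>)"
    by (auto simp: Z9_carrier)
  fix y :: nat assume "0 < y \<and> (\<forall>x\<in>carrier (integer_mod_group 9). x [^]\<^bsub>integer_mod_group 9\<^esub> y = \<one>\<^bsub>integer_mod_group 9\<^esub>)"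
  then have "0 < y" "int y mod 9 = 0" by (auto simp: Z9_carrier)
  then show "9 \<le> y" by presburger
qed

lemma mModZ: "monoid.mult (FactGroup H K) A B = set_mult H A B"
  by (simp add: FactGroup_def)

lemma Z9_quot: "finprod (integer_mod_group 9 Mod {0,3,6}) (\<lambda>S. S) (carrier (integer_mod_group 9 Mod {0,3,6})) = {0,3,6}"
proof -
  interpret Q: comm_group "integer_mod_group 9 Mod {0,3,6}"
    by (rule comm_group.abelian_FactGroup[OF abelian_integer_mod_group Z9_sub])
  have p1: "set_mult (integer_mod_group 9) {1,4,7} {2,5,8} = {0,3,6}"
    unfolding set_mult_def by auto
  have p2: "set_mult (integer_mod_group 9) {0,3,6} {0,3,6} = {0,3,6}"
    unfolding set_mult_def by auto
  have p3: "set_mult (integer_mod_group 9) {2,5,8} {0,3,6} = {2,5,8}"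
    unfolding set_mult_def by auto
  have fin: "finite {{1,4,7},{2,5,8::int}}" by simp
  have n1: "{0,3,6::int} \<notin> {{1,4,7},{2,5,8}}"
    by (auto dest: arg_cong[where f="\<lambda>S. (0::int) \<in> S"])
  have n2: "{1,4,7::int} \<notin> {{2,5,8}}"
    by (auto dest: arg_cong[where f="\<lambda>S. (1::int) \<in> S"])
  have C: "{{0,3,6},{1,4,7},{2,5,8::int}} \<subseteq> carrier (integer_mod_group 9 Mod {0,3,6})"
    by (simp add: Z9_rcosets)
  have "finprod (integer_mod_group 9 Mod {0,3,6}) (\<lambda>S. S) {{0,3,6},{1,4,7},{2,5,8}}
     = monoid.mult (integer_mod_group 9 Mod {0,3,6}) {0,3,6} (monoid.mult (integer_mod_group 9 Mod {0,3,6}) {1,4,7} (monoid.mult (integer_mod_group 9 Mod {0,3,6}) {2,5,8} \<one>\<^bsub>integer_mod_group 9 Mod {0,3,6}\<^esub>))"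
    using C n1 n2 by (simp del: insert_iff)
  also have "\<dots> = {0,3,6}" using C by (simp add: mModZ p1 p2 p3)
  finally show ?thesis unfolding Z9_rcosets .
qed



lemma Z9_no: "\<not> has_pandiagonal_magic_cs_table (integer_mod_group 9)"
proof
  assume "has_pandiagonal_magic_cs_table (integer_mod_group 9)"
  then obtain k R C where T: "pandiagonal_magic_cs_table (integer_mod_group 9) k R C"
    unfolding has_pandiagonal_magic_cs_table_def by blast
  have cG: "card (carrier (integer_mod_group 9)) = 9" by (simp add: carrier_integer_mod_group)
  from T have "k * k = 9" unfolding pandiagonal_magic_cs_table_def cG by simp
  have k: "k = 3"
  proof (rule ccontr)
    assume "k \<noteq> 3"
    with \<open>k * k = 9\<close> have "k \<le> 2 \<or> 4 \<le> k" by auto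
    then show False
    proof
      assume "k \<le> 2" then have "k * k \<le> 2 * 2" using mult_le_mono by blast
      with \<open>k * k = 9\<close> show False by simp
    next
      assume "4 \<le> k" then have "4 * 4 \<le> k * k" using mult_le_mono by blast
      with \<open>k * k = 9\<close> show False by simp
    qed
  qed
  let ?e = "\<lambda>i j. (R i + C j) mod 9"
  have T4: "\<forall>a<k. \<forall>b<k. let e = (\<lambda>i j. R (a * k + i) \<otimes>\<^bsub>integer_mod_group 9\<^esub> C (b * k + j)) in
        bij_betw (\<lambda>(i, j). e i j) ({..<k} \<times> {..<k}) (carrier (integer_mod_group 9)) \<and>
        (\<forall>i<k. finprod (integer_mod_group 9) (\<lambda>j. e i j) {..<k} = \<one>\<^bsub>integer_mod_group 9\<^esub>) \<and>
        (\<forall>j<k. finprod (integer_mod_group 9) (\<lambda>i. e i j) {..<k} = \<one>\<^bsub>integer_mod_group 9\<^esub>) \<and>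
        (\<forall>j<k. finprod (integer_mod_group 9) (\<lambda>l. e l ((l + j) mod k)) {..<k} = \<one>\<^bsub>integer_mod_group 9\<^esub>) \<and>
        (\<forall>j<k. finprod (integer_mod_group 9) (\<lambda>l. e l ((j + k - l) mod k)) {..<k} = \<one>\<^bsub>integer_mod_group 9\<^esub>)"
    using T unfolding pandiagonal_magic_cs_table_def by blast
  have T0: "bij_betw (\<lambda>(i, j). ?e i j) ({..<3} \<times> {..<3}) (carrier (integer_mod_group 9)) \<and>
        (\<forall>i<3. finprod (integer_mod_group 9) (\<lambda>j. ?e i j) {..<3} = 0) \<and>
        (\<forall>j<3. finprod (integer_mod_group 9) (\<lambda>i. ?e i j) {..<3} = 0)"
    using T4[rule_format, of 0 0] unfolding k Let_def by simp
  then have B: "bij_betw (\<lambda>(i, j). ?e i j) ({..<3} \<times> {..<3}) (carrier (integer_mod_group 9))"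
    and rows: "\<forall>i<3. finprod (integer_mod_group 9) (\<lambda>j. ?e i j) {..<3} = 0"
    and cols: "\<forall>j<3. finprod (integer_mod_group 9) (\<lambda>i. ?e i j) {..<3} = 0"
    by blast+
  have ein: "?e i j \<in> carrier (integer_mod_group 9)" for i j by (simp add: carrier_integer_mod_group)
  have r: "(3 * R i + sum C {..<3}) mod 9 = 0" if "i < 3" for i
  proof -
    have "0 = sum (\<lambda>j. ?e i j) {..<3} mod 9" using rows that finprod_imod[of "{..<3}" "\<lambda>j. ?e i j" 9] ein by auto
    also have "\<dots> = sum (\<lambda>j. R i + C j) {..<3} mod 9" by (simp add: mod_sum_eq)
    also have "\<dots> = (3 * R i + sum C {..<3}) mod 9" by (simp add: sum.distrib)
    finally show ?thesis by simp
  qed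
  have c: "(3 * C j + sum R {..<3}) mod 9 = 0" if "j < 3" for j
  proof -
    have "0 = sum (\<lambda>i. ?e i j) {..<3} mod 9" using cols that finprod_imod[of "{..<3}" "\<lambda>i. ?e i j" 9] ein by auto
    also have "\<dots> = sum (\<lambda>i. R i + C j) {..<3} mod 9" by (simp add: mod_sum_eq)
    also have "\<dots> = (3 * C j + sum R {..<3}) mod 9" by (simp add: sum.distrib add.commute)
    finally show ?thesis by simp
  qed
  have d3: "x mod 3 = y mod 3" if "(3 * x + S) mod 9 = 0" "(3 * y + S) mod 9 = 0" for x y S :: int
  proof -
    have "(3 * x + S) mod 9 = (3 * y + S) mod 9" using that by simp
    then have "9 dvd (3 * x + S) - (3 * y + S)" by (simp only: mod_eq_dvd_iff)
    then have "3 * 3 dvd 3 * (x - y)" by (simp add: algebra_simps)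
    then have "3 dvd x - y" by (subst (asm) dvd_mult_cancel_left) simp_all
    then show ?thesis by (simp only: mod_eq_dvd_iff)
  qed
  have r3: "R i mod 3 = R 0 mod 3" if "i < 3" for i using d3[OF r[OF that] r[of 0]] by simp
  have c3: "C i mod 3 = C 0 mod 3" if "i < 3" for i using d3[OF c[OF that] c[of 0]] by simp
  have all: "?e i j mod 3 = (R 0 + C 0) mod 3" if "i < 3" "j < 3" for i j
  proof -
    have "?e i j mod 3 = (R i + C j) mod 3" by (simp add: mod_mod_cancel)
    also have "\<dots> = (R i mod 3 + C j mod 3) mod 3" by (simp add: mod_add_eq)
    also have "\<dots> = (R 0 + C 0) mod 3" using r3[OF that(1)] c3[OF that(2)] by (simp add: mod_add_eq)
    finally show ?thesis .
  qed
  have "0 \<in> (\<lambda>(i, j). ?e i j) ` ({..<3} \<times> {..<3})" "1 \<in> (\<lambda>(i, j). ?e i j) ` ({..<3} \<times> {..<3})"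
    using B unfolding bij_betw_def by (auto simp: carrier_integer_mod_group)
  then obtain i j i' j' where "i < 3" "j < 3" "i' < 3" "j' < 3" "?e i j = 0" "?e i' j' = 1" by auto
  then have "(0::int) mod 3 = (R 0 + C 0) mod 3" "(1::int) mod 3 = (R 0 + C 0) mod 3"
    using all[of i j] all[of i' j'] by simp_all
  then show False by simp
qed



abbreviation "V4 \<equiv> integer_mod_group 2 \<times>\<times> integer_mod_group 2"

lemma V4_carrier: "carrier V4 = {0,1} \<times> {0,1}"
  by (auto simp: carrier_integer_mod_group)

lemma V4_comm: "comm_group V4"
proof -
  interpret group V4 by (rule DirProd_group) simp_all
  show ?thesis
    by (rule group_comm_groupI) (auto simp: mult_DirProd' add.commute)
qed

lemma V4_card: "card (carrier V4) = 2 ^ 2"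
  unfolding V4_carrier by simp

lemma V4_exp: "group_exponent V4 dvd 2"
proof -
  interpret comm_group V4 by (rule V4_comm)
  have "group_exponent V4 = 2"
    unfolding group_exponent_def
  proof (rule Least_equality)
    have "x [^]\<^bsub>V4\<^esub> (2::nat) = \<one>\<^bsub>V4\<^esub>" if "x \<in> carrier V4" for x
      using that unfolding numeral_2_eq_2 by (auto simp: V4_carrier)
    then show "0 < (2::nat) \<and> (\<forall>x\<in>carrier V4. x [^]\<^bsub>V4\<^esub> (2::nat) = \<one>\<^bsub>V4\<^esub>)" by simp
    fix y :: nat assume "0 < y \<and> (\<forall>x\<in>carrier V4. x [^]\<^bsub>V4\<^esub> y = \<one>\<^bsub>V4\<^esub>)"
    then have "0 < y" and h: "(1,0) [^]\<^bsub>V4\<^esub> y = \<one>\<^bsub>V4\<^esub>" by (auto simp: V4_carrier)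
    show "2 \<le> y"
    proof (rule ccontr)
      assume "\<not> 2 \<le> y" with \<open>0 < y\<close> have "y = 1" by simp
      with h show False by simp
    qed
  qed
  then show ?thesis by simp
qed

lemma V4_sub: "\<exists>N. subgroup N V4 \<and> card N = 2"
proof (intro exI conjI)
  show "subgroup {(0,0),(1,0)} V4"
    by (rule subgroup.intro) (auto simp: carrier_integer_mod_group)
  show "card {(0::int,0::int),(1,0)} = 2" by simp
qed

lemma V4_no: "\<not> has_pandiagonal_magic_cs_table V4"
proof
  interpret comm_group V4 by (rule V4_comm)
  assume "has_pandiagonal_magic_cs_table V4"
  then obtain k R C where T: "pandiagonal_magic_cs_table V4 k R C"
    unfolding has_pandiagonal_magic_cs_table_def by blast
  have "k * k = card (carrier V4)" using T[unfolded pandiagonal_magic_cs_table_def] by (rule conjunct1)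
  then have "k * k = 4" unfolding V4_card by simp
  have k: "k = 2"
  proof (rule ccontr)
    assume "k \<noteq> 2"
    with \<open>k * k = 4\<close> have "k \<le> 1 \<or> 3 \<le> k" by auto
    then show False
    proof
      assume "k \<le> 1" then have "k * k \<le> 1 * 1" using mult_le_mono by blast
      with \<open>k * k = 4\<close> show False by simp
    next
      assume "3 \<le> k" then have "3 * 3 \<le> k * k" using mult_le_mono by blast
      with \<open>k * k = 4\<close> show False by simp
    qed
  qed
  let ?e = "\<lambda>i j. R i \<otimes>\<^bsub>V4\<^esub> C j"
  note T4 = T[unfolded pandiagonal_magic_cs_table_def, THEN conjunct2, THEN conjunct2, THEN conjunct2]
  have p2: "0 < (2::nat)" by simp
  note T0 = T4[rule_format, of 0 0, unfolded k Let_def mult_zero_left add_0, OF p2 p2]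
  have bij: "bij_betw (\<lambda>(i, j). ?e i j) ({..<2} \<times> {..<2}) (carrier V4)"
    using T0 by (rule conjunct1)
  have row: "finprod V4 (\<lambda>j. ?e 0 j) {..<2} = \<one>\<^bsub>V4\<^esub>"
    using T0[THEN conjunct2, THEN conjunct1, rule_format, OF p2] .
  have inj: "inj_on (\<lambda>(i, j). ?e i j) ({..<2} \<times> {..<2})" using bij by (rule bij_betw_imp_inj_on)
  have B: "(\<lambda>(i, j). ?e i j) ` ({..<2} \<times> {..<2}) = carrier V4" using bij by (rule bij_betw_imp_surj_on)
  have ein: "?e i j \<in> carrier V4" if "i < 2" "j < 2" for i j
  proof -
    have "(\<lambda>(i, j). ?e i j) (i, j) \<in> (\<lambda>(i, j). ?e i j) ` ({..<2} \<times> {..<2})"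
      using that by (intro imageI) simp
    then show ?thesis unfolding B by simp
  qed
  have l2: "{..<2::nat} = {0, 1}" by auto
  have "finprod V4 (\<lambda>j. ?e 0 j) {..<2} = ?e 0 0 \<otimes>\<^bsub>V4\<^esub> ?e 0 1"
  proof -
    have "?e 0 1 \<in> carrier V4" "?e 0 0 \<in> carrier V4" using ein by simp_all
    then show ?thesis unfolding l2 by (simp add: Pi_iff del: one_DirProd)
  qed
  with row have eq: "?e 0 0 \<otimes>\<^bsub>V4\<^esub> ?e 0 1 = \<one>\<^bsub>V4\<^esub>" by simp
  have "?e 0 0 = ?e 0 1"
  proof -
    obtain a b where ab: "?e 0 0 = (a, b)" "a \<in> {0,1}" "b \<in> {0,1}" using ein[of 0 0] V4_carrier by auto
    obtain c d where cd: "?e 0 1 = (c, d)" "c \<in> {0,1}" "d \<in> {0,1}" using ein[of 0 1] V4_carrier by auto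
    from eq have "(a + c) mod 2 = 0" "(b + d) mod 2 = 0" unfolding ab cd by simp_all
    with ab cd have "a = c" "b = d" by auto
    with ab cd show ?thesis by simp
  qed
  then have "(\<lambda>(i, j). ?e i j) (0,0) = (\<lambda>(i, j). ?e i j) (0,1)" by simp
  from inj_onD[OF inj this] show False by simp
qed


theorem lemma4p4:
  shows "(let G = integer_mod_group 9; N = {0, 3, 6} in
           card (carrier G) = 3 ^ 2 \<and> subgroup N G \<and> card N = 3 \<and>
           finprod G (\<lambda>x. x) N = \<one>\<^bsub>G\<^esub> \<and>
           finprod (G Mod N) (\<lambda>S. S) (carrier (G Mod N)) = N \<and>
           group_exponent G = 9 \<and> \<not> group_exponent G dvd 3 \<and>
           \<not> has_pandiagonal_magic_cs_table G) \<and>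
         (let G = DirProd (integer_mod_group 2) (integer_mod_group 2) in
           card (carrier G) = 2 ^ 2 \<and> group_exponent G dvd 2 \<and>
           \<not> has_pandiagonal_magic_cs_table G \<and>
           (\<exists>N. subgroup N G \<and> card N = 2))"
proof -
  have c9: "card (carrier (integer_mod_group 9)) = 3 ^ 2" by (simp add: carrier_integer_mod_group)
  have cN: "card {0, 3, 6::int} = 3" by simp
  have fN: "finprod (integer_mod_group 9) (\<lambda>x. x) {0, 3, 6} = \<one>\<^bsub>integer_mod_group 9\<^esub>"
    by (subst finprod_imod) (auto simp: carrier_integer_mod_group)
  show ?thesis
    unfolding Let_def
    using c9 Z9_sub cN fN Z9_quot Z9_exp Z9_no V4_card V4_exp V4_no V4_sub by simp
qed

end
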